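(* Let $P=\{p_1,\dots,p_k\}$ be an ordered family of real polynomials. Then there exists a polynomial $p\in P$ such that, for all except at most one value of $h\in\mathbb{Z}$, the family $(p,h)^*P$ has type strictly smaller than the type of $P$, and the polynomial $p_1(t+h)-p(t)$ is its leading polynomial (i.e. belongs to $(p,h)^*P$ and has maximal degree in it).
   Context: A family $\{p_1,\dots,p_k\}$ of real polynomials is ordered if $\deg p_1\ge\deg p_2\ge\dots\ge\deg p_k$; then $p_1$ is its leading polynomial. The van der Corput operation: for a polynomial $p$ and $h\in\mathbb{Z}$, $(p,h)^*P$ is the family $\{p_1(t+h)-p(t),\dots,p_k(t+h)-p(t),\,p_1(t)-p(t),\dots,p_k(t)-p(t)\}$ with the polynomials of degree $0$ removed. The type of a family is $(d,w_d,\dots,w_1)$, where $d$ is the largest degree of its members and $w_i$ is the number of distinct leading coefficients among members of degree exactly $i$. Types are ordered first by $d$ and then, for equal $d$, lexicographically in $(w_d,\dots,w_1)$. *)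

theory Defs
  imports "HOL-Computational_Algebra.Polynomial"
begin

definition shift_poly :: "real poly \<Rightarrow> int \<Rightarrow> real poly" where
  "shift_poly q h = pcompose q [:of_int h, 1:]"

definition ordered_family :: "real poly list \<Rightarrow> bool" where
  "ordered_family ps \<longleftrightarrow> sorted_wrt (\<lambda>p q. degree p \<ge> degree q) ps"

definition vdc :: "real poly \<Rightarrow> int \<Rightarrow> real poly set \<Rightarrow> real poly set" where
  "vdc p h P = {r. (r \<in> (\<lambda>q. shift_poly q h - p) ` P \<or> r \<in> (\<lambda>q. q - p) ` P) \<and> degree r \<noteq> 0}"

text \<open>Type (d, w_d, ..., w_1), represented as the pair (d, [w_d, ..., w_1]).\<close>
definition max_deg :: "real poly set \<Rightarrow> nat" where
  "max_deg F = Max (insert 0 (degree ` F))"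

definition family_type :: "real poly set \<Rightarrow> nat \<times> nat list" where
  "family_type F = (max_deg F,
     map (\<lambda>i. card (lead_coeff ` {q \<in> F. degree q = i})) (rev [1..<max_deg F + 1]))"

definition type_less :: "nat \<times> nat list \<Rightarrow> nat \<times> nat list \<Rightarrow> bool" where
  "type_less a b \<longleftrightarrow> fst a < fst b \<or>
     (fst a = fst b \<and> (snd a, snd b) \<in> lexord {(x, y). x < y})"

end

theory Submission
  imports Defs
begin

lemma shift_deg[simp]: "degree (shift_poly q h) = degree q"
  by (simp add: shift_poly_def degree_pcompose)

lemma shift_lc[simp]: "lead_coeff (shift_poly q h) = lead_coeff q"
  by (simp add: shift_poly_def lead_coeff_comp)

lemma shift_lc'[simp]: "coeff (shift_poly q h) (degree q) = lead_coeff q"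
  using shift_lc[of q h] by simp

lemma diff_gt:
  fixes a b :: "real poly"
  assumes "degree b < degree a"
  shows "degree (a - b) = degree a \<and> lead_coeff (a - b) = lead_coeff a"
proof -
  have "a - b = a + (- b)" by simp
  then show ?thesis using assms degree_add_eq_left[of "-b" a]
    by (metis (no_types, lifting) add.commute degree_minus lead_coeff_add_le)
qed

lemma diff_eq_ne:
  fixes a b :: "real poly"
  assumes "degree a = degree b" "lead_coeff a \<noteq> lead_coeff b"
  shows "degree (a - b) = degree a \<and> lead_coeff (a - b) = lead_coeff a - lead_coeff b"
proof -
  have c: "coeff (a - b) (degree a) \<noteq> 0" using assms by simp
  have "degree (a - b) \<le> degree a" using assms degree_diff_le[of a "degree a" b] by simp
  moreover have "degree a \<le> degree (a - b)" using c le_degree by blast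
  ultimately show ?thesis using assms by simp
qed

lemma diff_eq_eq:
  fixes a b :: "real poly"
  assumes "degree a = degree b" "lead_coeff a = lead_coeff b" "degree a \<ge> 1"
  shows "degree (a - b) < degree a"
proof -
  have "degree (a - b) \<le> degree a" using assms degree_diff_le[of a "degree a" b] by simp
  moreover have "degree (a - b) \<noteq> degree a"
  proof
    assume h: "degree (a - b) = degree a"
    have "coeff (a - b) (degree a) = 0" using assms by simp
    then have "a - b = 0" using h by (metis leading_coeff_0_iff)
    then show False using h assms by simp
  qed
  ultimately show ?thesis by simp
qed

lemma shift_pCons: "shift_poly (pCons a p) h = [:a:] + [:of_int h, 1:] * shift_poly p h"
  by (simp add: shift_poly_def pcompose_pCons)

lemma shift_coeff:
  fixes p :: "real poly"
  assumes "degree p \<ge> 1"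
  shows "coeff (shift_poly p h) (degree p - 1) = coeff p (degree p - 1) + of_nat (degree p) * of_int h * lead_coeff p"
  using assms
proof (induct p)
  case 0 then show ?case by simp
next
  case (pCons a p)
  have pn: "p \<noteq> 0" using pCons by auto
  show ?case
  proof (cases "degree p = 0")
    case True
    then obtain c where c: "p = [:c:]" by (meson degree_eq_zeroE)
    have "shift_poly p h = [:c:]" using c by (simp add: shift_poly_def)
    then show ?thesis using c pn by (simp add: shift_pCons)
  next
    case False
    then obtain n where n: "degree p = Suc n" by (cases "degree p") auto
    have dg: "degree (pCons a p) = Suc (Suc n)" using n pn by simp
    have ih: "coeff (shift_poly p h) n = coeff p n + of_nat (Suc n) * of_int h * lead_coeff p"
      using pCons n by simp
    have lc: "coeff (shift_poly p h) (Suc n) = lead_coeff p"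
      using n by (metis shift_deg shift_lc)
    have "coeff (shift_poly (pCons a p) h) (Suc n) = of_int h * coeff (shift_poly p h) (Suc n) + coeff (shift_poly p h) n"
      by (simp add: shift_pCons)
    then show ?thesis using dg ih lc n by (simp add: algebra_simps)
  qed
qed

lemma shift_self_deg:
  fixes p :: "real poly"
  assumes "degree p \<ge> 1" "h \<noteq> 0"
  shows "degree (shift_poly p h - p) = degree p - 1"
proof -
  have c: "coeff (shift_poly p h - p) (degree p - 1) \<noteq> 0"
    using shift_coeff[OF assms(1), of h] assms by (cases "p = 0") auto
  have "degree (shift_poly p h - p) < degree p"
    using diff_eq_eq[of "shift_poly p h" p, OF shift_deg shift_lc] assms by simp
  moreover have "degree p - 1 \<le> degree (shift_poly p h - p)" using c le_degree by blast
  ultimately show ?thesis by simp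
qed

lemma vdc_E:
  assumes "r \<in> vdc p h P"
  obtains q s where "q \<in> P" "r = s - p" "degree s = degree q" "lead_coeff s = lead_coeff q" "degree r \<noteq> 0"
  using assms unfolding vdc_def
  by (smt (verit, best) imageE mem_Collect_eq shift_deg shift_lc)

lemma vdc_I1: "q \<in> P \<Longrightarrow> degree (q - p) \<noteq> 0 \<Longrightarrow> q - p \<in> vdc p h P"
  unfolding vdc_def by auto

lemma vdc_I2: "q \<in> P \<Longrightarrow> degree (shift_poly q h - p) \<noteq> 0 \<Longrightarrow> shift_poly q h - p \<in> vdc p h P"
  unfolding vdc_def by auto

lemma vdc_finite: "finite P \<Longrightarrow> finite (vdc p h P)"
proof -
  assume "finite P"
  then have "finite ((\<lambda>q. shift_poly q h - p) ` P \<union> (\<lambda>q. q - p) ` P)" by simp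
  moreover have "vdc p h P \<subseteq> (\<lambda>q. shift_poly q h - p) ` P \<union> (\<lambda>q. q - p) ` P"
    unfolding vdc_def by auto
  ultimately show ?thesis by (rule finite_subset[rotated])
qed

lemma vdc_deg_le:
  assumes "\<forall>q\<in>P. degree q \<le> d" "degree p \<le> d" "r \<in> vdc p h P"
  shows "degree r \<le> d"
proof -
  obtain q s where "q \<in> P" "r = s - p" "degree s = degree q"
    using vdc_E[OF assms(3)] by metis
  then show ?thesis using assms degree_diff_le[of s d p] by auto
qed

lemma max_deg_le: "finite F \<Longrightarrow> \<forall>r\<in>F. degree r \<le> d \<Longrightarrow> max_deg F \<le> d"
  unfolding max_deg_def by (subst Max_le_iff) auto

lemma max_deg_eq: "finite F \<Longrightarrow> \<forall>r\<in>F. degree r \<le> d \<Longrightarrow> x \<in> F \<Longrightarrow> degree x = d \<Longrightarrow> max_deg F = d"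
proof -
  assume a: "finite F" "\<forall>r\<in>F. degree r \<le> d" "x \<in> F" "degree x = d"
  have "max_deg F \<le> d" using a max_deg_le by blast
  moreover have "d \<le> max_deg F" unfolding max_deg_def using a
    by (metis Max_ge finite_imageI finite_insert image_eqI insertI2)
  ultimately show ?thesis by simp
qed

lemma lex_lemma:
  fixes f g :: "nat \<Rightarrow> nat"
  assumes "1 \<le> m" "m \<le> d" "\<forall>i. m < i \<and> i \<le> d \<longrightarrow> f i = g i" "f m < g m"
  shows "(map f (rev [1..<d+1]), map g (rev [1..<d+1])) \<in> lexord {(x,y). x<y}"
proof -
  have "[1..<d+1] = [1..<m] @ [m..<d+1]" using assms upt_add_eq_append[of 1 m "d+1-m"] by simp
  also have "[m..<d+1] = m # [m+1..<d+1]" using assms upt_conv_Cons by simp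
  finally have e: "rev [1..<d+1] = rev [m+1..<d+1] @ m # rev [1..<m]" by simp
  have "map f (rev [m+1..<d+1]) = map g (rev [m+1..<d+1])"
    using assms(3) by (intro map_cong) auto
  moreover have "(f m, g m) \<in> {(x,y). x<y}" using assms(4) by simp
  ultimately show ?thesis unfolding e map_append list.map(2)
    by (metis lexord_append_left_rightI)
qed

lemma A_hi:
  assumes "\<forall>q\<in>P. m \<le> degree q" "degree p = m" "m < i"
  shows "lead_coeff ` {r \<in> vdc p h P. degree r = i} = lead_coeff ` {q \<in> P. degree q = i}"
proof
  show "lead_coeff ` {r \<in> vdc p h P. degree r = i} \<subseteq> lead_coeff ` {q \<in> P. degree q = i}"
  proof
    fix c assume "c \<in> lead_coeff ` {r \<in> vdc p h P. degree r = i}"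
    then obtain r where r: "r \<in> vdc p h P" "degree r = i" "c = lead_coeff r" by auto
    obtain q s where qs: "q \<in> P" "r = s - p" "degree s = degree q" "lead_coeff s = lead_coeff q"
      using vdc_E[OF r(1)] by metis
    show "c \<in> lead_coeff ` {q \<in> P. degree q = i}"
    proof (cases "degree q > m")
      case True
      then have "degree p < degree s" using qs assms by simp
      then have "degree r = degree q \<and> lead_coeff r = lead_coeff q"
        using diff_gt[of p s] qs by metis
      then show ?thesis using r qs by auto
    next
      case False
      then have "degree s \<le> m" using qs by simp
      then have "degree r \<le> m" using qs assms degree_diff_le[of s m p] by simp
      then show ?thesis using r assms by simp
    qed
  qed
next
  show "lead_coeff ` {q \<in> P. degree q = i} \<subseteq> lead_coeff ` {r \<in> vdc p h P. degree r = i}"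
  proof
    fix c assume "c \<in> lead_coeff ` {q \<in> P. degree q = i}"
    then obtain q where q: "q \<in> P" "degree q = i" "c = lead_coeff q" by auto
    have "degree p < degree q" using q assms by simp
    then have d: "degree (q - p) = degree q \<and> lead_coeff (q - p) = lead_coeff q"
      using diff_gt[of p q] by blast
    then have "q - p \<in> vdc p h P" using vdc_I1[OF q(1)] q assms by simp
    then have "q - p \<in> {r \<in> vdc p h P. degree r = i}" using d q by simp
    moreover have "c = lead_coeff (q - p)" using d q by metis
    ultimately show "c \<in> lead_coeff ` {r \<in> vdc p h P. degree r = i}" by (rule image_eqI[rotated])
  qed
qed

lemma A_mid:
  assumes "\<forall>q\<in>P. m \<le> degree q" "degree p = m" "1 \<le> m"
  shows "lead_coeff ` {r \<in> vdc p h P. degree r = m} =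
    (\<lambda>c. c - lead_coeff p) ` (lead_coeff ` {q \<in> P. degree q = m} - {lead_coeff p})"
proof
  show "lead_coeff ` {r \<in> vdc p h P. degree r = m} \<subseteq> (\<lambda>c. c - lead_coeff p) ` (lead_coeff ` {q \<in> P. degree q = m} - {lead_coeff p})"
  proof
    fix c assume "c \<in> lead_coeff ` {r \<in> vdc p h P. degree r = m}"
    then obtain r where r: "r \<in> vdc p h P" "degree r = m" "c = lead_coeff r" by auto
    obtain q s where qs: "q \<in> P" "r = s - p" "degree s = degree q" "lead_coeff s = lead_coeff q"
      using vdc_E[OF r(1)] by metis
    show "c \<in> (\<lambda>c. c - lead_coeff p) ` (lead_coeff ` {q \<in> P. degree q = m} - {lead_coeff p})"
    proof (cases "degree q > m")
      case True
      then have "degree r = degree q"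
        using diff_gt[of p s] qs assms by simp
      then show ?thesis using r True by simp
    next
      case False
      then have dq: "degree q = m" using qs assms by force
      show ?thesis
      proof (cases "lead_coeff q = lead_coeff p")
        case True
        then have "degree r < m" using diff_eq_eq[of s p] qs dq assms by simp
        then show ?thesis using r by simp
      next
        case False
        have "degree s = degree p" "lead_coeff s \<noteq> lead_coeff p" using qs dq assms False by auto
        then have "lead_coeff r = lead_coeff q - lead_coeff p"
          using diff_eq_ne[of s p] qs by metis
        then show ?thesis using r qs dq False by force
      qed
    qed
  qed
next
  show "(\<lambda>c. c - lead_coeff p) ` (lead_coeff ` {q \<in> P. degree q = m} - {lead_coeff p}) \<subseteq> lead_coeff ` {r \<in> vdc p h P. degree r = m}"
  proof
    fix c assume "c \<in> (\<lambda>c. c - lead_coeff p) ` (lead_coeff ` {q \<in> P. degree q = m} - {lead_coeff p})"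
    then obtain q where q: "q \<in> P" "degree q = m" "c = lead_coeff q - lead_coeff p" "lead_coeff q \<noteq> lead_coeff p" by auto
    have "degree q = degree p" using q assms by simp
    then have d: "degree (q - p) = degree q \<and> lead_coeff (q - p) = lead_coeff q - lead_coeff p"
      using diff_eq_ne[of q p] q by blast
    then have "q - p \<in> vdc p h P" using vdc_I1[OF q(1)] q assms by simp
    then have "q - p \<in> {r \<in> vdc p h P. degree r = m}" using d q by simp
    moreover have "c = lead_coeff (q - p)" using d q by metis
    ultimately show "c \<in> lead_coeff ` {r \<in> vdc p h P. degree r = m}" by (rule image_eqI[rotated])
  qed
qed

lemma caseA:
  fixes P :: "real poly set"
  assumes fin: "finite P" and dle: "\<forall>q\<in>P. degree q \<le> d" and dge: "\<forall>q\<in>P. degree p \<le> degree q"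
    and pP: "p \<in> P" and p1P: "p1 \<in> P" and dp1: "degree p1 = d" and m1: "1 \<le> degree p"
    and alt: "degree p < d \<or> lead_coeff p \<noteq> lead_coeff p1"
  shows "type_less (family_type (vdc p h P)) (family_type P) \<and>
    shift_poly p1 h - p \<in> vdc p h P \<and>
    (\<forall>r \<in> vdc p h P. degree r \<le> degree (shift_poly p1 h - p))"
proof -
  define m where "m = degree p"
  have md: "m \<le> d" using dle pP m_def by auto
  have dge': "\<forall>q\<in>P. m \<le> degree q" using dge m_def by simp
  have m1': "1 \<le> m" using m1 m_def by simp
  have dl: "degree (shift_poly p1 h - p) = d"
  proof (cases "degree p < d")
    case True
    then have "degree p < degree (shift_poly p1 h)" using dp1 by simp
    from diff_gt[OF this] have "degree (shift_poly p1 h - p) = degree (shift_poly p1 h)" by blast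
    then show ?thesis using dp1 by simp
  next
    case False
    then have e1: "degree (shift_poly p1 h) = degree p" 
      using alt md m_def dp1 by auto
    have "lead_coeff p \<noteq> lead_coeff p1" using alt False by blast
    then have e2: "lead_coeff (shift_poly p1 h) \<noteq> lead_coeff p"
      using shift_lc[of p1 h] by argo
    from diff_eq_ne[OF e1 e2] have "degree (shift_poly p1 h - p) = degree (shift_poly p1 h)" by blast
    then show ?thesis using dp1 by simp
  qed
  have inv: "shift_poly p1 h - p \<in> vdc p h P"
    using vdc_I2[OF p1P] dl md m1 m_def by simp
  have vle: "\<forall>r\<in>vdc p h P. degree r \<le> d"
    using vdc_deg_le[OF dle] md m_def by blast
  have mv: "max_deg (vdc p h P) = d"
    using max_deg_eq[OF vdc_finite[OF fin] vle inv dl] .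
  have mP: "max_deg P = d" using max_deg_eq[OF fin dle p1P dp1] .
  define f where "f = (\<lambda>i. card (lead_coeff ` {q \<in> vdc p h P. degree q = i}))"
  define g where "g = (\<lambda>i. card (lead_coeff ` {q \<in> P. degree q = i}))"
  have hi: "\<forall>i. m < i \<and> i \<le> d \<longrightarrow> f i = g i"
  proof (intro allI impI)
    fix i assume "m < i \<and> i \<le> d"
    then have "m < i" by simp
    have e: "lead_coeff ` {r \<in> vdc p h P. degree r = i} = lead_coeff ` {q \<in> P. degree q = i}"
      by (rule A_hi[OF dge' m_def[symmetric] \<open>m < i\<close>])
    show "f i = g i" unfolding f_def g_def e ..
  qed
  define S where "S = lead_coeff ` {q \<in> P. degree q = m}"
  have finS: "finite S" unfolding S_def using fin by simp
  have pS: "lead_coeff p \<in> S" unfolding S_def using pP m_def by auto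
  have e: "lead_coeff ` {r \<in> vdc p h P. degree r = m} = (\<lambda>c. c - lead_coeff p) ` (S - {lead_coeff p})"
    unfolding S_def by (rule A_mid[OF dge' m_def[symmetric] m1'])
  have "f m = card ((\<lambda>c. c - lead_coeff p) ` (S - {lead_coeff p}))"
    unfolding f_def e ..
  also have "\<dots> = card (S - {lead_coeff p})"
    by (rule card_image) (simp add: inj_on_def)
  also have "\<dots> = card S - 1" using pS finS by simp
  also have "\<dots> < card S"
  proof -
    have "card S > 0" using pS finS card_gt_0_iff by blast
    then show ?thesis by simp
  qed
  finally have fg: "f m < g m" unfolding g_def S_def .
  have lx: "(map f (rev [1..<d+1]), map g (rev [1..<d+1])) \<in> lexord {(x,y). x<y}"
    using lex_lemma[OF m1' md hi fg] .
  have t1: "family_type (vdc p h P) = (d, map f (rev [1..<d+1]))"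
    unfolding family_type_def mv f_def ..
  have t2: "family_type P = (d, map g (rev [1..<d+1]))"
    unfolding family_type_def mP g_def ..
  have "type_less (family_type (vdc p h P)) (family_type P)"
    unfolding type_less_def t1 t2 fst_conv snd_conv using lx by blast
  then show ?thesis using inv vle dl by simp
qed

lemma caseB:
  fixes P :: "real poly set"
  assumes fin: "finite P" and all: "\<forall>q\<in>P. degree q = d \<and> lead_coeff q = lead_coeff p1"
    and p1P: "p1 \<in> P" and d2: "2 \<le> d" and h: "h \<noteq> 0"
  shows "type_less (family_type (vdc p1 h P)) (family_type P) \<and>
    shift_poly p1 h - p1 \<in> vdc p1 h P \<and>
    (\<forall>r \<in> vdc p1 h P. degree r \<le> degree (shift_poly p1 h - p1))"
proof -
  have dp1: "degree p1 = d" using all p1P by simp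
  have sd: "degree (shift_poly p1 h - p1) = d - 1"
    using shift_self_deg[of p1 h] dp1 d2 h by simp
  have inv: "shift_poly p1 h - p1 \<in> vdc p1 h P"
    using vdc_I2[OF p1P] sd d2 by simp
  have vle: "\<forall>r\<in>vdc p1 h P. degree r \<le> d - 1"
  proof
    fix r assume r: "r \<in> vdc p1 h P"
    obtain q s where qs: "q \<in> P" "r = s - p1" "degree s = degree q" "lead_coeff s = lead_coeff q"
      using vdc_E[OF r] by metis
    have "degree s = degree p1" "lead_coeff s = lead_coeff p1" "degree s \<ge> 1"
      using qs all dp1 d2 by auto
    then have "degree r < d" using diff_eq_eq[of s p1] qs dp1 by metis
    then show "degree r \<le> d - 1" by simp
  qed
  have mv: "max_deg (vdc p1 h P) \<le> d - 1" using max_deg_le[OF vdc_finite[OF fin] vle] .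
  have mP: "max_deg P = d" using max_deg_eq[OF fin _ p1P dp1] all by simp
  have "fst (family_type (vdc p1 h P)) < fst (family_type P)"
    unfolding family_type_def fst_conv using mv mP d2 by simp
  then have "type_less (family_type (vdc p1 h P)) (family_type P)"
    unfolding type_less_def by blast
  then show ?thesis using inv vle sd by simp
qed

theorem proposition4p7:
  fixes ps :: "real poly list"
  assumes "ps \<noteq> []"
    and "ordered_family ps"
    and "\<forall>q \<in> set ps. degree q \<ge> 1"
    and "family_type (set ps) \<noteq> (1, [1])"
  shows "\<exists>p \<in> set ps. \<exists>h0 :: int. \<forall>h :: int. h \<noteq> h0 \<longrightarrow>
           type_less (family_type (vdc p h (set ps))) (family_type (set ps)) \<and>
           shift_poly (hd ps) h - p \<in> vdc p h (set ps) \<and>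
           (\<forall>r \<in> vdc p h (set ps). degree r \<le> degree (shift_poly (hd ps) h - p))"
proof -
  obtain p1 rest where ps: "ps = p1 # rest" using assms(1) by (cases ps) auto
  define P where "P = set ps"
  define d where "d = degree p1"
  have hd: "hd ps = p1" using ps by simp
  have fin: "finite P" unfolding P_def by simp
  have p1P: "p1 \<in> P" unfolding P_def ps by simp
  have dle: "\<forall>q\<in>P. degree q \<le> d"
    using assms(2) unfolding P_def ps d_def ordered_family_def by auto
  have ge1: "\<forall>q\<in>P. 1 \<le> degree q" using assms(3) P_def by simp
  define m where "m = Min (degree ` P)"
  have "m \<in> degree ` P" unfolding m_def using fin p1P by (intro Min_in) auto
  then obtain p0 where p0: "p0 \<in> P" "degree p0 = m" by auto
  have mle: "\<forall>q\<in>P. m \<le> degree q" unfolding m_def using fin by simp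
  have md: "m \<le> d" using mle p1P d_def by auto
  have m1: "1 \<le> m" using ge1 p0 by auto
  show ?thesis
  proof (cases "m < d")
    case True
    have "\<forall>h. type_less (family_type (vdc p0 h P)) (family_type P) \<and>
    shift_poly p1 h - p0 \<in> vdc p0 h P \<and>
    (\<forall>r \<in> vdc p0 h P. degree r \<le> degree (shift_poly p1 h - p0))"
      using caseA[OF fin dle _ p0(1) p1P d_def[symmetric]] mle p0 ge1 True m1 by simp
    then show ?thesis using p0(1) unfolding P_def hd by blast
  next
    case False
    then have alld: "\<forall>q\<in>P. degree q = d" using mle dle md by (metis antisym le_trans not_less)
    show ?thesis
    proof (cases "\<exists>p\<in>P. lead_coeff p \<noteq> lead_coeff p1")
      case True
      then obtain p where p: "p \<in> P" "lead_coeff p \<noteq> lead_coeff p1" by blast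
      have "\<forall>h. type_less (family_type (vdc p h P)) (family_type P) \<and>
      shift_poly p1 h - p \<in> vdc p h P \<and>
      (\<forall>r \<in> vdc p h P. degree r \<le> degree (shift_poly p1 h - p))"
        using caseA[OF fin dle _ p(1) p1P d_def[symmetric]] alld p ge1 md m1 by simp
      then show ?thesis using p(1) unfolding P_def hd by blast
    next
      case False
      then have all: "\<forall>q\<in>P. degree q = d \<and> lead_coeff q = lead_coeff p1" using alld by auto
      have d2: "2 \<le> d"
      proof (rule ccontr)
        assume "\<not> 2 \<le> d"
        then have d1: "d = 1" using ge1 p1P d_def by force
        have mP: "max_deg P = 1" using max_deg_eq[OF fin dle p1P] d1 d_def by simp
        have "lead_coeff ` {q \<in> P. degree q = 1} = {lead_coeff p1}"
        proof
          show "lead_coeff ` {q \<in> P. degree q = 1} \<subseteq> {lead_coeff p1}" using all by auto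
          have "p1 \<in> {q \<in> P. degree q = 1}" using all d1 p1P by auto
          then show "{lead_coeff p1} \<subseteq> lead_coeff ` {q \<in> P. degree q = 1}" by blast
        qed
        then have "family_type P = (1, [1])"
          unfolding family_type_def mP by simp
        then show False using assms(4) P_def by simp
      qed
      have "\<forall>h. h \<noteq> 0 \<longrightarrow> type_less (family_type (vdc p1 h P)) (family_type P) \<and>
      shift_poly p1 h - p1 \<in> vdc p1 h P \<and>
      (\<forall>r \<in> vdc p1 h P. degree r \<le> degree (shift_poly p1 h - p1))"
        using caseB[OF fin all p1P d2] by blast
      then show ?thesis using p1P unfolding P_def hd by blast
    qed
  qed
qed
end
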